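(* Let $G$ be a simple plane graph all of whose faces, including the outer face, are triangles, and let $\Delta(G)$ be its maximum degree. Then $\lambda(G)\ge-\Delta(G)/2$. If moreover $G$ is $k$-regular and $\chi(G)=3$, then $\lambda(G)=-k/2$.
   Context: $\lambda(G)$ is the smallest adjacency eigenvalue and $\chi(G)$ the chromatic number. *)

theory Defs
  imports "HOL-Analysis.Analysis"
begin

text \<open>Finite simple graphs on a finite vertex type 'n (vertex set = UNIV),
  given by a symmetric irreflexive adjacency relation.\<close>

definition simple_graph :: "('n::finite \<Rightarrow> 'n \<Rightarrow> bool) \<Rightarrow> bool" where
  "simple_graph E \<longleftrightarrow> (\<forall>u v. E u v \<longrightarrow> E v u) \<and> (\<forall>u. \<not> E u u)"

definition degree :: "('n::finite \<Rightarrow> 'n \<Rightarrow> bool) \<Rightarrow> 'n \<Rightarrow> nat" where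
  "degree E v = card {u. E v u}"

definition max_degree :: "('n::finite \<Rightarrow> 'n \<Rightarrow> bool) \<Rightarrow> nat" where
  "max_degree E = Max (range (degree E))"

definition regular :: "('n::finite \<Rightarrow> 'n \<Rightarrow> bool) \<Rightarrow> nat \<Rightarrow> bool" where
  "regular E k \<longleftrightarrow> (\<forall>v. degree E v = k)"

definition proper_colouring :: "('n::finite \<Rightarrow> 'n \<Rightarrow> bool) \<Rightarrow> nat \<Rightarrow> ('n \<Rightarrow> nat) \<Rightarrow> bool" where
  "proper_colouring E k c \<longleftrightarrow> (\<forall>v. c v < k) \<and> (\<forall>u v. E u v \<longrightarrow> c u \<noteq> c v)"

definition chromatic_number :: "('n::finite \<Rightarrow> 'n \<Rightarrow> bool) \<Rightarrow> nat" where
  "chromatic_number E = (LEAST k. \<exists>c. proper_colouring E k c)"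

definition adj_matrix :: "('n::finite \<Rightarrow> 'n \<Rightarrow> bool) \<Rightarrow> real^'n^'n" where
  "adj_matrix E = (\<chi> i j. if E i j then 1 else 0)"

definition is_eigenvalue :: "real^'n^'n \<Rightarrow> real \<Rightarrow> bool" where
  "is_eigenvalue A l \<longleftrightarrow> (\<exists>x. x \<noteq> 0 \<and> A *v x = l *\<^sub>R x)"

text \<open>Smallest adjacency eigenvalue (the adjacency matrix is real symmetric,
  so all its eigenvalues are real and there are finitely many, at least one).\<close>
definition smallest_eigenvalue :: "('n::finite \<Rightarrow> 'n \<Rightarrow> bool) \<Rightarrow> real" where
  "smallest_eigenvalue E = Min {l. is_eigenvalue (adj_matrix E) l}"

definition plane_embedding ::
  "('n::finite \<Rightarrow> 'n \<Rightarrow> bool) \<Rightarrow> ('n \<Rightarrow> complex) \<Rightarrow> ('n \<Rightarrow> 'n \<Rightarrow> real \<Rightarrow> complex) \<Rightarrow> bool" where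
  "plane_embedding E pos \<gamma> \<longleftrightarrow>
     inj pos \<and>
     (\<forall>u v. E u v \<longrightarrow> arc (\<gamma> u v) \<and> pathstart (\<gamma> u v) = pos u \<and> pathfinish (\<gamma> u v) = pos v
                     \<and> path_image (\<gamma> u v) = path_image (\<gamma> v u)) \<and>
     (\<forall>u v x y. E u v \<longrightarrow> E x y \<longrightarrow> {u, v} \<noteq> {x, y} \<longrightarrow>
        path_image (\<gamma> u v) \<inter> path_image (\<gamma> x y) \<subseteq> pos ` ({u, v} \<inter> {x, y})) \<and>
     (\<forall>w u v. E u v \<longrightarrow> pos w \<in> path_image (\<gamma> u v) \<longrightarrow> w = u \<or> w = v)"

definition drawing ::
  "('n::finite \<Rightarrow> 'n \<Rightarrow> bool) \<Rightarrow> ('n \<Rightarrow> complex) \<Rightarrow> ('n \<Rightarrow> 'n \<Rightarrow> real \<Rightarrow> complex) \<Rightarrow> complex set" where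
  "drawing E pos \<gamma> = range pos \<union> (\<Union>{path_image (\<gamma> u v) | u v. E u v})"

text \<open>Faces = connected components of the complement of the drawing
  (this includes the unbounded outer face).\<close>
definition faces ::
  "('n::finite \<Rightarrow> 'n \<Rightarrow> bool) \<Rightarrow> ('n \<Rightarrow> complex) \<Rightarrow> ('n \<Rightarrow> 'n \<Rightarrow> real \<Rightarrow> complex) \<Rightarrow> complex set set" where
  "faces E pos \<gamma> = components (- drawing E pos \<gamma>)"

definition triangular_face ::
  "('n::finite \<Rightarrow> 'n \<Rightarrow> bool) \<Rightarrow> ('n \<Rightarrow> complex) \<Rightarrow> ('n \<Rightarrow> 'n \<Rightarrow> real \<Rightarrow> complex) \<Rightarrow> complex set \<Rightarrow> bool" where
  "triangular_face E pos \<gamma> F \<longleftrightarrow>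
     (\<exists>u v w. E u v \<and> E v w \<and> E w u \<and>
        frontier F = path_image (\<gamma> u v) \<union> path_image (\<gamma> v w) \<union> path_image (\<gamma> w u))"

definition plane_triangulation :: "('n::finite \<Rightarrow> 'n \<Rightarrow> bool) \<Rightarrow> bool" where
  "plane_triangulation E \<longleftrightarrow> simple_graph E \<and>
     (\<exists>pos \<gamma>. plane_embedding E pos \<gamma> \<and> (\<forall>F\<in>faces E pos \<gamma>. triangular_face E pos \<gamma> F))"

end

theory Submission
  imports Defs
begin

lemma arc_interior_empty:
  fixes g :: "real \<Rightarrow> complex"
  assumes "arc g" shows "interior (path_image g) = {}"
proof (rule ccontr)
  assume "interior (path_image g) \<noteq> {}"
  then obtain B where B: "open B" "B \<noteq> {}" "B \<subseteq> path_image g"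
    by (meson interior_subset open_interior)
  have inj: "inj_on g {0..1}" and cg: "continuous_on {0..1} g"
    using assms by (auto simp: arc_def path_def)
  have c: "continuous_on (g ` {0..1}) (the_inv_into {0..1} g)"
    by (rule continuous_on_inv_into[OF cg compact_Icc inj])
  have "continuous_on B (the_inv_into {0..1} g)"
    using c B(3) by (simp add: path_image_def continuous_on_subset)
  moreover have "inj_on (the_inv_into {0..1} g) B"
    using B(3) unfolding path_image_def
    by (metis inj inj_on_def inj_on_subset the_inv_into_onto inj_on_the_inv_into)
  ultimately have "DIM(complex) \<le> DIM(real)"
    using invariance_of_dimension B by blast
  then show False by simp
qed

lemma interior_finite_Union_empty:
  fixes C :: "'a::topological_space set set"
  assumes "finite C" "\<And>S. S \<in> C \<Longrightarrow> closed S \<and> interior S = {}"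
  shows "interior (\<Union>C) = {}"
  using assms
proof (induction C rule: finite_induct)
  case empty then show ?case by simp
next
  case (insert S C)
  then have "interior (\<Union>C) = {}" by blast
  then show ?case using insert interior_closed_Un_empty_interior[of S "\<Union>C"] by simp
qed

lemma closure_finite_Union:
  fixes C :: "'a::topological_space set set"
  assumes "finite C" shows "closure (\<Union>C) = \<Union>(closure ` C)"
  using assms by (induction C rule: finite_induct) auto

lemma simple_path_mid:
  fixes c :: "real \<Rightarrow> 'a::real_normed_vector"
  assumes "simple_path c" "pathstart c \<noteq> pathfinish c"
  shows "c (1/2) \<in> path_image c" "c (1/2) \<noteq> pathstart c" "c (1/2) \<noteq> pathfinish c"
proof -
  have lf: "\<And>x y. x \<in> {0..1} \<Longrightarrow> y \<in> {0..1} \<Longrightarrow> c x = c y \<Longrightarrow> x = y \<or> x = 0 \<and> y = 1 \<or> x = 1 \<and> y = 0"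
    using assms(1) unfolding simple_path_def loop_free_def by blast
  show "c (1/2) \<in> path_image c" unfolding path_image_def by simp
  show "c (1/2) \<noteq> pathstart c"
    unfolding pathstart_def using lf[of "1/2" 0] by auto
  show "c (1/2) \<noteq> pathfinish c"
    unfolding pathfinish_def using lf[of "1/2" 1] by auto
qed

lemma conn_split:
  assumes "connected S" "open U" "open V" "U \<inter> V = {}" "S \<subseteq> U \<union> V"
  shows "S \<subseteq> U \<or> S \<subseteq> V"
  using connectedD[OF assms(1,2,3)] assms(4,5) by blast

lemma theta_middle:
  fixes c1 c2 c3 :: "real \<Rightarrow> complex"
  assumes s1: "simple_path c1" and s2: "simple_path c2" and s3: "simple_path c3"
    and e1: "pathstart c1 = a" "pathfinish c1 = b"
    and e2: "pathstart c2 = a" "pathfinish c2 = b"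
    and e3: "pathstart c3 = a" "pathfinish c3 = b"
    and ab: "a \<noteq> b"
    and i12: "path_image c1 \<inter> path_image c2 = {a,b}"
    and i13: "path_image c1 \<inter> path_image c3 = {a,b}"
    and i23: "path_image c2 \<inter> path_image c3 = {a,b}"
    and h1: "path_image c1 \<inter> inside (path_image c2 \<union> path_image c3) = {}"
    and h2: "path_image c2 \<inter> inside (path_image c1 \<union> path_image c3) = {}"
  shows "path_image c3 \<inter> inside (path_image c1 \<union> path_image c2) \<noteq> {}"
proof
  assume h3: "path_image c3 \<inter> inside (path_image c1 \<union> path_image c2) = {}"
  define P1 where "P1 = path_image c1"
  define P2 where "P2 = path_image c2"
  define P3 where "P3 = path_image c3"
  have arcs: "arc c1" "arc c2" "arc c3"
    using s1 s2 s3 e1 e2 e3 ab by (auto simp: simple_path_eq_arc)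
  have jor: "simple_path (ci +++ reversepath cj) \<and> pathfinish (ci +++ reversepath cj) = pathstart (ci +++ reversepath cj)
     \<and> path_image (ci +++ reversepath cj) = path_image ci \<union> path_image cj"
    if "arc ci" "arc cj" "pathstart ci = a" "pathfinish ci = b" "pathstart cj = a" "pathfinish cj = b"
       "path_image ci \<inter> path_image cj = {a,b}" for ci cj
  proof -
    have "simple_path (ci +++ reversepath cj)"
      using that by (intro simple_path_join_loop) (auto simp: arc_reversepath)
    then show ?thesis using that by (auto simp: path_image_join)
  qed
  note J12 = Jordan_inside_outside[OF conjunct1[OF jor[OF arcs(1,2) e1 e2 i12]] conjunct1[OF conjunct2[OF jor[OF arcs(1,2) e1 e2 i12]]]]
  note J13 = Jordan_inside_outside[OF conjunct1[OF jor[OF arcs(1,3) e1 e3 i13]] conjunct1[OF conjunct2[OF jor[OF arcs(1,3) e1 e3 i13]]]]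
  have i23': "path_image c2 \<inter> path_image c3 = {a,b}" by (fact i23)
  note J23 = Jordan_inside_outside[OF conjunct1[OF jor[OF arcs(2,3) e2 e3 i23]] conjunct1[OF conjunct2[OF jor[OF arcs(2,3) e2 e3 i23]]]]
  have im12: "path_image (c1 +++ reversepath c2) = P1 \<union> P2"
    using jor[OF arcs(1,2) e1 e2 i12] by (simp add: P1_def P2_def)
  have im13: "path_image (c1 +++ reversepath c3) = P1 \<union> P3"
    using jor[OF arcs(1,3) e1 e3 i13] by (simp add: P1_def P3_def)
  have im23: "path_image (c2 +++ reversepath c3) = P2 \<union> P3"
    using jor[OF arcs(2,3) e2 e3 i23] by (simp add: P2_def P3_def)
  note J12 = J12[unfolded im12] and J13 = J13[unfolded im13] and J23 = J23[unfolded im23]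
  have ab1: "a \<in> P1" "b \<in> P1" "a \<in> P2" "b \<in> P2" "a \<in> P3" "b \<in> P3"
    using e1 e2 e3 unfolding P1_def P2_def P3_def by (metis pathstart_in_path_image pathfinish_in_path_image)+
  have Yq: "\<exists>q\<in>P. q \<noteq> a \<and> q \<noteq> b" if "P = path_image c" "simple_path c" "pathstart c = a" "pathfinish c = b" for P c
    using simple_path_mid[of c] that ab by metis
  have key: "inside (X \<union> Y) \<subseteq> outside (X \<union> Z)"
    if JXY: "frontier (inside (X \<union> Y)) = X \<union> Y"
    and JXZ: "open (inside (X \<union> Z)) \<and> open (outside (X \<union> Z)) \<and> inside (X \<union> Z) \<inter> outside (X \<union> Z) = {}
             \<and> inside (X \<union> Z) \<union> outside (X \<union> Z) = - (X \<union> Z) \<and> frontier (inside (X \<union> Z)) = X \<union> Z"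
    and conI: "connected (inside (X \<union> Y))"
    and hZ: "Z \<inter> inside (X \<union> Y) = {}" and hY: "Y \<inter> inside (X \<union> Z) = {}"
    and XY: "X \<inter> Y = {a,b}" and YZ: "Y \<inter> Z = {a,b}"
    and Yne: "\<exists>q\<in>Y. q \<noteq> a \<and> q \<noteq> b"
    for X Y Z :: "complex set"
  proof -
    let ?I = "inside (X \<union> Y)"
    have sub: "?I \<subseteq> inside (X \<union> Z) \<union> outside (X \<union> Z)"
      using JXZ hZ inside_no_overlap[of "X \<union> Y"] by blast
    have o: "open (inside (X \<union> Z))" "open (outside (X \<union> Z))" "inside (X \<union> Z) \<inter> outside (X \<union> Z) = {}"
      using JXZ by blast+
    have "?I \<subseteq> inside (X \<union> Z) \<or> ?I \<subseteq> outside (X \<union> Z)"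
      by (rule conn_split[OF conI o sub])
    moreover have "\<not> ?I \<subseteq> inside (X \<union> Z)"
    proof
      assume "?I \<subseteq> inside (X \<union> Z)"
      then have "closure ?I \<subseteq> closure (inside (X \<union> Z))" by (rule closure_mono)
      moreover have "X \<union> Y \<subseteq> closure ?I" using JXY frontier_def by (metis Diff_subset)
      moreover have "closure (inside (X \<union> Z)) = inside (X \<union> Z) \<union> X \<union> Z"
        using JXZ closure_Un_frontier[of "inside (X \<union> Z)"] by auto
      ultimately have "Y \<subseteq> inside (X \<union> Z) \<union> X \<union> Z" by blast
      then show False using Yne XY YZ hY by blast
    qed
    ultimately show ?thesis by blast
  qed
  have Y1: "\<exists>q\<in>P1. q \<noteq> a \<and> q \<noteq> b" using Yq[OF P1_def s1 e1] .
  have Y2: "\<exists>q\<in>P2. q \<noteq> a \<and> q \<noteq> b" using Yq[OF P2_def s2 e2] .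
  have hh: "P3 \<inter> inside (P1 \<union> P2) = {}" "P2 \<inter> inside (P1 \<union> P3) = {}" "P1 \<inter> inside (P2 \<union> P3) = {}"
    "P1 \<inter> P2 = {a,b}" "P2 \<inter> P3 = {a,b}" "P1 \<inter> P3 = {a,b}"
    using h1 h2 h3 i12 i13 i23 by (simp_all add: P1_def P2_def P3_def)
  have c21: "P2 \<union> P1 = P1 \<union> P2" by blast
  have F12: "frontier (inside (P1 \<union> P2)) = P1 \<union> P2" "connected (inside (P1 \<union> P2))"
    using J12 by blast+
  have F21: "frontier (inside (P2 \<union> P1)) = P2 \<union> P1" "connected (inside (P2 \<union> P1))"
    unfolding c21 using F12 by blast+
  have G13: "open (inside (P1 \<union> P3)) \<and> open (outside (P1 \<union> P3)) \<and> inside (P1 \<union> P3) \<inter> outside (P1 \<union> P3) = {}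
             \<and> inside (P1 \<union> P3) \<union> outside (P1 \<union> P3) = - (P1 \<union> P3) \<and> frontier (inside (P1 \<union> P3)) = P1 \<union> P3"
    using J13 by blast
  have G23: "open (inside (P2 \<union> P3)) \<and> open (outside (P2 \<union> P3)) \<and> inside (P2 \<union> P3) \<inter> outside (P2 \<union> P3) = {}
             \<and> inside (P2 \<union> P3) \<union> outside (P2 \<union> P3) = - (P2 \<union> P3) \<and> frontier (inside (P2 \<union> P3)) = P2 \<union> P3"
    using J23 by blast
  have hh2: "P3 \<inter> inside (P2 \<union> P1) = {}" "P2 \<inter> P1 = {a,b}" "P1 \<inter> P3 = {a,b}"
    using hh unfolding c21 by blast+
  have I3O2: "inside (P1 \<union> P2) \<subseteq> outside (P1 \<union> P3)"
    by (rule key[OF F12(1) G13 F12(2) hh(1) hh(2) hh(4) hh(5) Y2])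
  have I3O1: "inside (P2 \<union> P1) \<subseteq> outside (P2 \<union> P3)"
    by (rule key[OF F21(1) G23 F21(2) hh2(1) hh(3) hh2(2) hh2(3) Y1])
  obtain x where x: "x \<in> inside (P1 \<union> P2)" using J12 by blast
  have bP: "bounded P1" "bounded P2" "bounded P3"
    unfolding P1_def P2_def P3_def using s1 s2 s3
    by (auto intro!: compact_imp_bounded compact_path_image simp: simple_path_imp_path)
  have "bounded (- outside (P1 \<union> P2) \<union> - outside (P1 \<union> P3) \<union> - outside (P2 \<union> P3))"
    using bP by (intro bounded_Un[THEN iffD2] conjI cobounded_outside) auto
  then obtain r where r: "r > 0" "- outside (P1 \<union> P2) \<union> - outside (P1 \<union> P3) \<union> - outside (P2 \<union> P3) \<subseteq> ball 0 r"
    using bounded_subset_ballD by blast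
  define y where "y = complex_of_real r"
  have "y \<notin> ball 0 r" using r by (simp add: y_def)
  then have y: "y \<in> outside (P1 \<union> P2)" "y \<in> outside (P1 \<union> P3)" "y \<in> outside (P2 \<union> P3)"
    using r by blast+
  have cO13: "connected (outside (P1 \<union> P3))" using J13 by blast
  have cO23: "connected (outside (P2 \<union> P3))" using J23 by blast
  have cc1: "connected_component (- (P1 \<union> P3)) x y"
    unfolding connected_component_def
  proof (intro exI conjI)
    show "connected (outside (P1 \<union> P3))" by (fact cO13)
    show "outside (P1 \<union> P3) \<subseteq> - (P1 \<union> P3)" using outside_no_overlap[of "P1 \<union> P3"] by blast
    show "x \<in> outside (P1 \<union> P3)" using I3O2 x by blast
    show "y \<in> outside (P1 \<union> P3)" by (fact y(2))
  qed
  have I3O1': "inside (P1 \<union> P2) \<subseteq> outside (P2 \<union> P3)" using I3O1 by (simp add: c21)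
  have cc2: "connected_component (- (P2 \<union> P3)) x y"
    unfolding connected_component_def
  proof (intro exI conjI)
    show "connected (outside (P2 \<union> P3))" by (fact cO23)
    show "outside (P2 \<union> P3) \<subseteq> - (P2 \<union> P3)" using outside_no_overlap[of "P2 \<union> P3"] by blast
    show "x \<in> outside (P2 \<union> P3)" using I3O1' x by blast
    show "y \<in> outside (P2 \<union> P3)" by (fact y(3))
  qed
  have cpt: "compact (P1 \<union> P3)" "closed (P2 \<union> P3)"
    unfolding P1_def P2_def P3_def using s1 s2 s3
    by (auto intro!: compact_Un closed_Un compact_imp_closed compact_path_image simp: simple_path_imp_path)
  have "(P1 \<union> P3) \<inter> (P2 \<union> P3) = P3" using i12 ab1 by (auto simp: P1_def P2_def)
  then have con: "connected ((P1 \<union> P3) \<inter> (P2 \<union> P3))"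
    using s3 by (simp add: P3_def connected_simple_path_image)
  have "connected_component (- ((P1 \<union> P3) \<union> (P2 \<union> P3))) x y"
    by (rule Janiszewski[OF cpt con cc1 cc2])
  then obtain C where C: "connected C" "C \<subseteq> - ((P1 \<union> P3) \<union> (P2 \<union> P3))" "x \<in> C" "y \<in> C"
    unfolding connected_component_def by blast
  have o1: "open (inside (P1 \<union> P2))" "open (outside (P1 \<union> P2))"
     "inside (P1 \<union> P2) \<inter> outside (P1 \<union> P2) = {}"
     "inside (P1 \<union> P2) \<union> outside (P1 \<union> P2) = - (P1 \<union> P2)"
    using J12 by blast+
  have "C \<subseteq> inside (P1 \<union> P2) \<union> outside (P1 \<union> P2)" using C(2) o1(4) by blast
  then have "C \<subseteq> inside (P1 \<union> P2) \<or> C \<subseteq> outside (P1 \<union> P2)"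
    by (rule conn_split[OF C(1) o1(1-3)])
  then show False using x y C(3,4) o1(3) by blast
qed

locale ptri =
  fixes E :: "'n::finite \<Rightarrow> 'n \<Rightarrow> bool" and pos :: "'n \<Rightarrow> complex"
    and \<gamma> :: "'n \<Rightarrow> 'n \<Rightarrow> real \<Rightarrow> complex"
  assumes sg: "simple_graph E" and emb: "plane_embedding E pos \<gamma>"
    and tf: "\<forall>F\<in>faces E pos \<gamma>. triangular_face E pos \<gamma> F"
begin

abbreviation "A u v \<equiv> path_image (\<gamma> u v)"
abbreviation "D \<equiv> drawing E pos \<gamma>"
abbreviation "FS \<equiv> faces E pos \<gamma>"
definition "tri F = {x. pos x \<in> frontier F}"

lemma symE: "E u v \<Longrightarrow> E v u" using sg by (simp add: simple_graph_def)
lemma irrE: "\<not> E u u" using sg by (simp add: simple_graph_def)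
lemma arcE: "E u v \<Longrightarrow> arc (\<gamma> u v)" using emb by (simp add: plane_embedding_def)
lemma startE: "E u v \<Longrightarrow> pathstart (\<gamma> u v) = pos u" using emb by (simp add: plane_embedding_def)
lemma finishE: "E u v \<Longrightarrow> pathfinish (\<gamma> u v) = pos v" using emb by (simp add: plane_embedding_def)
lemma A_sym: "E u v \<Longrightarrow> A v u = A u v" using emb unfolding plane_embedding_def by metis
lemma cross: "E u v \<Longrightarrow> E x y \<Longrightarrow> {u,v} \<noteq> {x,y} \<Longrightarrow> A u v \<inter> A x y \<subseteq> pos ` ({u,v} \<inter> {x,y})"
  using emb unfolding plane_embedding_def by blast
lemma vert: "E u v \<Longrightarrow> pos w \<in> A u v \<Longrightarrow> w = u \<or> w = v"
  using emb unfolding plane_embedding_def by blast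
lemma inj_pos: "inj pos" using emb by (simp add: plane_embedding_def)
lemma posA: "E u v \<Longrightarrow> pos u \<in> A u v" "E u v \<Longrightarrow> pos v \<in> A u v"
  by (metis startE pathstart_in_path_image, metis finishE pathfinish_in_path_image)

lemma D_eq: "D = range pos \<union> \<Union>((\<lambda>(u,v). A u v) ` {(u,v). E u v})"
  unfolding drawing_def by auto

lemma A_D: "E u v \<Longrightarrow> A u v \<subseteq> D" unfolding drawing_def by blast

lemma compactA: "E u v \<Longrightarrow> compact (A u v)"
  by (simp add: arcE arc_imp_path compact_path_image)

lemma D_compact: "compact D"
  unfolding D_eq
  by (intro compact_Un compact_Union) (auto simp: compactA intro: finite_imp_compact)

lemma D_bounded: "bounded D" using D_compact compact_imp_bounded by blast
lemma D_closed: "closed D" using D_compact compact_imp_closed by blast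

lemma interior_D: "interior D = {}"
proof -
  have "D = \<Union>((\<lambda>v. {pos v}) ` UNIV \<union> (\<lambda>(u,v). A u v) ` {(u,v). E u v})"
    unfolding D_eq by auto
  also have "interior \<dots> = {}"
    by (rule interior_finite_Union_empty)
       (auto simp: arc_interior_empty arcE compactA compact_imp_closed)
  finally show ?thesis .
qed

lemma face_open: "F \<in> FS \<Longrightarrow> open F"
  unfolding faces_def using open_components[of "- D" F] D_closed by (simp add: open_Compl)
lemma face_conn: "F \<in> FS \<Longrightarrow> connected F"
  unfolding faces_def using in_components_connected by blast
lemma face_ne: "F \<in> FS \<Longrightarrow> F \<noteq> {}"
  unfolding faces_def using in_components_nonempty by blast
lemma face_D: "F \<in> FS \<Longrightarrow> F \<inter> D = {}"
  unfolding faces_def using in_components_subset by blast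
lemma face_eq: "F \<in> FS \<Longrightarrow> G \<in> FS \<Longrightarrow> F \<inter> G \<noteq> {} \<Longrightarrow> F = G"
  unfolding faces_def using components_eq by blast
lemma faces_cover: "\<Union>FS = - D"
  unfolding faces_def by simp

lemma distinct3: "E a b \<Longrightarrow> E b c \<Longrightarrow> E c a \<Longrightarrow> a \<noteq> b \<and> b \<noteq> c \<and> c \<noteq> a"
  using irrE by metis

lemma tri_curve:
  assumes "E a b" "E b c" "E c a"
  shows "simple_path (\<gamma> a b +++ (\<gamma> b c +++ \<gamma> c a)) \<and>
         pathfinish (\<gamma> a b +++ (\<gamma> b c +++ \<gamma> c a)) = pathstart (\<gamma> a b +++ (\<gamma> b c +++ \<gamma> c a)) \<and>
         path_image (\<gamma> a b +++ (\<gamma> b c +++ \<gamma> c a)) = A a b \<union> A b c \<union> A c a"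
proof -
  have d: "a \<noteq> b" "b \<noteq> c" "c \<noteq> a" using distinct3[OF assms] by auto
  have i1: "A b c \<inter> A c a \<subseteq> {pos c}"
    using cross[OF assms(2,3)] d by auto
  have arc2: "arc (\<gamma> b c +++ \<gamma> c a)"
    using assms i1 by (intro arc_join) (auto simp: arcE startE finishE)
  have im2: "path_image (\<gamma> b c +++ \<gamma> c a) = A b c \<union> A c a"
    using assms by (simp add: path_image_join startE finishE)
  have i2: "A a b \<inter> A b c \<subseteq> {pos b}" "A a b \<inter> A c a \<subseteq> {pos a}"
    using cross[OF assms(1,2)] cross[OF assms(1,3)] d by auto
  have sp: "simple_path (\<gamma> a b +++ (\<gamma> b c +++ \<gamma> c a))"
    using assms arc2 i2 im2 by (intro simple_path_join_loop) (auto simp: arcE startE finishE)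
  then show ?thesis
    using assms im2 by (auto simp: path_image_join startE finishE)
qed

lemma face_tri: "F \<in> FS \<Longrightarrow> \<exists>a b c. E a b \<and> E b c \<and> E c a \<and> frontier F = A a b \<union> A b c \<union> A c a"
  using tf unfolding triangular_face_def by blast

lemma tri_eq:
  assumes "E a b" "E b c" "E c a" "frontier F = A a b \<union> A b c \<union> A c a"
  shows "tri F = {a,b,c}"
proof -
  have "pos x \<in> frontier F \<longleftrightarrow> x \<in> {a,b,c}" for x
  proof
    assume "pos x \<in> frontier F"
    then have "pos x \<in> A a b \<or> pos x \<in> A b c \<or> pos x \<in> A c a" using assms(4) by blast
    then show "x \<in> {a,b,c}" using vert[OF assms(1)] vert[OF assms(2)] vert[OF assms(3)] by blast
  next
    assume "x \<in> {a,b,c}" then show "pos x \<in> frontier F" using posA assms by auto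
  qed
  then show ?thesis unfolding tri_def by blast
qed

lemma face_jordan:
  assumes "F \<in> FS"
  shows "inside (frontier F) \<noteq> {} \<and> open (inside (frontier F)) \<and> connected (inside (frontier F)) \<and>
          outside (frontier F) \<noteq> {} \<and> open (outside (frontier F)) \<and> connected (outside (frontier F)) \<and>
          bounded (inside (frontier F)) \<and> \<not> bounded (outside (frontier F)) \<and>
          inside (frontier F) \<inter> outside (frontier F) = {} \<and>
          inside (frontier F) \<union> outside (frontier F) = - frontier F \<and>
          frontier (inside (frontier F)) = frontier F \<and> frontier (outside (frontier F)) = frontier F"
proof -
  obtain a b c where abc: "E a b" "E b c" "E c a" "frontier F = A a b \<union> A b c \<union> A c a"
    using face_tri[OF assms] by blast
  have c: "simple_path (\<gamma> a b +++ (\<gamma> b c +++ \<gamma> c a))"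
    "pathfinish (\<gamma> a b +++ (\<gamma> b c +++ \<gamma> c a)) = pathstart (\<gamma> a b +++ (\<gamma> b c +++ \<gamma> c a))"
    "path_image (\<gamma> a b +++ (\<gamma> b c +++ \<gamma> c a)) = frontier F"
    using tri_curve[OF abc(1-3)] abc(4) by auto
  show ?thesis using Jordan_inside_outside[OF c(1,2)] unfolding c(3) .
qed

lemma frontier_D: "F \<in> FS \<Longrightarrow> frontier F \<subseteq> D"
  using face_tri A_D by blast

lemma face_side: "F \<in> FS \<Longrightarrow> F = inside (frontier F) \<or> F = outside (frontier F)"
proof -
  assume F: "F \<in> FS"
  note J = face_jordan[OF F]
  have J1: "open (inside (frontier F))" and J2: "open (outside (frontier F))"
    and J3: "inside (frontier F) \<inter> outside (frontier F) = {}"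
    and J4: "inside (frontier F) \<union> outside (frontier F) = - frontier F"
    and J5: "connected (inside (frontier F))" and J6: "connected (outside (frontier F))"
    using J by blast+
  have "F \<inter> frontier F = {}" using face_D[OF F] frontier_D[OF F] by blast
  then have "F \<subseteq> inside (frontier F) \<union> outside (frontier F)" using J4 by blast
  then have c: "F \<subseteq> inside (frontier F) \<or> F \<subseteq> outside (frontier F)"
    by (rule conn_split[OF face_conn[OF F] J1 J2 J3])
  have ss: "S \<subseteq> F" if "F \<subseteq> S" "connected S" "S \<inter> frontier F = {}" for S
  proof (rule ccontr)
    assume "\<not> S \<subseteq> F"
    then have a2: "S - F \<noteq> {}" by blast
    have a1: "S \<inter> F \<noteq> {}" using that(1) face_ne[OF F] by blast
    have "S \<inter> frontier F \<noteq> {}" by (rule connected_Int_frontier[OF that(2) a1 a2])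
    then show False using that(3) by blast
  qed
  have n1: "inside (frontier F) \<inter> frontier F = {}" by (rule inside_no_overlap)
  have n2: "outside (frontier F) \<inter> frontier F = {}" by (rule outside_no_overlap)
  show ?thesis
  proof (cases "F \<subseteq> inside (frontier F)")
    case True
    then show ?thesis using ss[OF True J5 n1] by blast
  next
    case False
    then have "F \<subseteq> outside (frontier F)" using c by blast
    then show ?thesis using ss[OF _ J6 n2] by blast
  qed
qed

lemma finite_FS: "finite FS"
proof -
  let ?J = "\<lambda>(a,b,c). A a b \<union> A b c \<union> A c a"
  have "FS \<subseteq> inside ` ?J ` UNIV \<union> outside ` ?J ` UNIV"
  proof
    fix F assume F: "F \<in> FS"
    then obtain a b c where "frontier F = ?J (a,b,c)" using face_tri by fastforce
    then have fr: "frontier F \<in> ?J ` UNIV" by blast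
    then show "F \<in> inside ` ?J ` UNIV \<union> outside ` ?J ` UNIV"
    proof (cases "F = inside (frontier F)")
      case True
      then have "F \<in> inside ` ?J ` UNIV" using fr by (rule image_eqI)
      then show ?thesis by (rule UnI1)
    next
      case False
      then have "F = outside (frontier F)" using face_side[OF F] by blast
      then have "F \<in> outside ` ?J ` UNIV" using fr by (rule image_eqI)
      then show ?thesis by (rule UnI2)
    qed
  qed
  then show ?thesis by (rule finite_subset) auto
qed

end

context ptri begin

lemma mid: "E u v \<Longrightarrow> \<gamma> u v (1/2) \<in> A u v \<and> \<gamma> u v (1/2) \<notin> range pos"
proof -
  assume uv: "E u v"
  have ne: "pathstart (\<gamma> u v) \<noteq> pathfinish (\<gamma> u v)"
    using uv inj_pos irrE by (metis startE finishE injD)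
  note m = simple_path_mid[OF arc_imp_simple_path[OF arcE[OF uv]] ne]
  have "\<gamma> u v (1/2) \<noteq> pos w" for w
    using m vert[OF uv, of w] uv startE finishE by metis
  then show ?thesis using m by auto
qed

lemma tri_adj: "F \<in> FS \<Longrightarrow> x \<in> tri F \<Longrightarrow> y \<in> tri F \<Longrightarrow> x \<noteq> y \<Longrightarrow> E x y"
proof -
  assume F: "F \<in> FS" and xy: "x \<in> tri F" "y \<in> tri F" "x \<noteq> y"
  obtain a b c where abc: "E a b" "E b c" "E c a" "frontier F = A a b \<union> A b c \<union> A c a"
    using face_tri[OF F] by blast
  have "tri F = {a,b,c}" by (rule tri_eq[OF abc])
  then show "E x y" using xy abc symE by auto
qed

lemma adj_side: "F \<in> FS \<Longrightarrow> E u v \<Longrightarrow> p \<in> A u v \<Longrightarrow> p \<notin> range pos \<Longrightarrow> E x y \<Longrightarrow> p \<in> A x y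
   \<Longrightarrow> x \<in> tri F \<Longrightarrow> y \<in> tri F \<Longrightarrow> u \<in> tri F \<and> v \<in> tri F"
proof -
  assume *: "F \<in> FS" "E u v" "p \<in> A u v" "p \<notin> range pos" "E x y" "p \<in> A x y" "x \<in> tri F" "y \<in> tri F"
  have "{u,v} = {x,y}"
  proof (rule ccontr)
    assume "{u,v} \<noteq> {x,y}"
    then have "p \<in> pos ` ({u,v} \<inter> {x,y})" using cross[OF *(2,5)] *(3,6) by blast
    then show False using *(4) by blast
  qed
  then show ?thesis using * by (metis doubleton_eq_iff)
qed

lemma adj: "F \<in> FS \<Longrightarrow> E u v \<Longrightarrow> p \<in> A u v \<Longrightarrow> p \<notin> range pos \<Longrightarrow> p \<in> frontier F
   \<Longrightarrow> u \<in> tri F \<and> v \<in> tri F"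
proof -
  assume *: "F \<in> FS" "E u v" "p \<in> A u v" "p \<notin> range pos" "p \<in> frontier F"
  obtain a b c where abc: "E a b" "E b c" "E c a" "frontier F = A a b \<union> A b c \<union> A c a"
    using face_tri[OF *(1)] by blast
  have t: "tri F = {a,b,c}" by (rule tri_eq[OF abc])
  have "p \<in> A a b \<or> p \<in> A b c \<or> p \<in> A c a" using *(5) abc(4) by blast
  then show ?thesis
    using adj_side[OF *(1-4)] abc t by blast
qed

lemma near:
  assumes "open U" "p \<in> closure U"
  shows "\<exists>F\<in>FS. F \<inter> U \<noteq> {} \<and> p \<in> closure F"
proof -
  have "U \<subseteq> closure (U \<inter> - D)"
    using open_Int_closure_subset[OF assms(1), of "- D"] by (simp add: closure_complement interior_D)
  then have "closure U \<subseteq> closure (U \<inter> - D)"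
    by (simp add: closure_minimal)
  also have "U \<inter> - D = \<Union>((\<lambda>F. U \<inter> F) ` FS)"
    using faces_cover by blast
  also have "closure \<dots> = \<Union>(closure ` (\<lambda>F. U \<inter> F) ` FS)"
    by (rule closure_finite_Union) (simp add: finite_FS)
  finally obtain F where F: "F \<in> FS" "p \<in> closure (U \<inter> F)" using assms(2) by blast
  then have "U \<inter> F \<noteq> {}" by auto
  moreover have "p \<in> closure F" using F(2) closure_mono[of "U \<inter> F" F] by blast
  ultimately show ?thesis using F(1) by blast
qed

lemma closure_frontier: "F \<in> FS \<Longrightarrow> p \<in> closure F \<Longrightarrow> p \<in> D \<Longrightarrow> p \<in> frontier F"
  using face_D face_open by (auto simp: frontier_def interior_open)

lemma ge2: "E u v \<Longrightarrow> \<exists>F G. F \<in> FS \<and> G \<in> FS \<and> F \<noteq> G \<and> u \<in> tri F \<and> v \<in> tri F \<and> u \<in> tri G \<and> v \<in> tri G"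
proof -
  assume uv: "E u v"
  define p where "p = \<gamma> u v (1/2)"
  have p: "p \<in> A u v" "p \<notin> range pos" using mid[OF uv] p_def by auto
  have pD: "p \<in> D" using p A_D[OF uv] by blast
  obtain F where F: "F \<in> FS" "p \<in> closure F" using near[of UNIV p] by auto
  have pF: "p \<in> frontier F" using closure_frontier F pD by blast
  note J = face_jordan[OF F(1)]
  obtain U where O: "open U" "U \<inter> F = {}" "frontier U = frontier F"
    using face_side[OF F(1)] J by (metis inf_commute)
  have "p \<in> closure U" using O(3) pF by (metis frontier_def Diff_iff)
  then obtain G where G: "G \<in> FS" "G \<inter> U \<noteq> {}" "p \<in> closure G" using near[OF O(1)] by blast
  have "F \<noteq> G" using G(2) O(2) by blast
  moreover have "p \<in> frontier G" using closure_frontier G pD by blast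
  ultimately show ?thesis
    using adj[OF F(1) uv p pF] adj[OF G(1) uv p] F(1) G(1) by blast
qed

lemma apex:
  assumes F: "F \<in> FS" and uv: "u \<in> tri F" "v \<in> tri F" "u \<noteq> v"
  shows "\<exists>w. w \<noteq> u \<and> w \<noteq> v \<and> E u v \<and> E u w \<and> E w v \<and> tri F = {u,v,w} \<and>
              frontier F = A u v \<union> A u w \<union> A w v"
proof -
  obtain a b c where abc: "E a b" "E b c" "E c a" "frontier F = A a b \<union> A b c \<union> A c a"
    using face_tri[OF F] by blast
  have t: "tri F = {a,b,c}" by (rule tri_eq[OF abc])
  have d: "a \<noteq> b" "b \<noteq> c" "c \<noteq> a" using distinct3[OF abc(1-3)] by auto
  define w where "w = (if a \<notin> {u,v} then a else if b \<notin> {u,v} then b else c)"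
  have t2: "{a,b,c} = {u,v,w}" "w \<noteq> u" "w \<noteq> v"
    using uv t d unfolding w_def by auto
  have s: "A b a = A a b" "A c b = A b c" "A a c = A c a" using A_sym abc by auto
  have fr: "frontier F = (\<Union>x\<in>{a,b,c}. \<Union>y\<in>{a,b,c}-{x}. A x y)"
    using abc(4) d s by auto
  have E3: "E u v" "E u w" "E w v" using tri_adj[OF F] uv t t2 by auto
  have s2: "A v u = A u v" "A w u = A u w" "A v w = A w v" using A_sym E3 symE by auto
  have "frontier F = (\<Union>x\<in>{u,v,w}. \<Union>y\<in>{u,v,w}-{x}. A x y)"
    using fr t2 by simp
  also have "\<dots> = A u v \<union> A u w \<union> A w v"
    using t2 uv(3) s2 by auto
  finally show ?thesis using E3 t t2 by blast
qed

lemma same_apex_False: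
  assumes F: "F1 \<in> FS" "F2 \<in> FS" "F3 \<in> FS" and d: "F1 \<noteq> F2" "F3 \<noteq> F1" "F3 \<noteq> F2"
    and fr: "frontier F1 = frontier F2"
  shows False
proof -
  have J4: "inside (frontier F1) \<union> outside (frontier F1) = - frontier F1"
    using face_jordan[OF F(1)] by blast
  have "F1 \<union> F2 = inside (frontier F1) \<union> outside (frontier F1)"
    using face_side[OF F(1)] face_side[OF F(2)] fr d(1) by (metis Un_commute)
  then have "F1 \<union> F2 = - frontier F1" using J4 by simp
  moreover have "F3 \<subseteq> - frontier F1" using face_D[OF F(3)] frontier_D[OF F(1)] by blast
  ultimately have "F3 \<inter> F1 \<noteq> {} \<or> F3 \<inter> F2 \<noteq> {}" using face_ne[OF F(3)] by blast
  then show False using face_eq F d by blast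
qed

lemma unbounded_unique: "F \<in> FS \<Longrightarrow> G \<in> FS \<Longrightarrow> \<not> bounded F \<Longrightarrow> \<not> bounded G \<Longrightarrow> F = G"
proof -
  assume *: "F \<in> FS" "G \<in> FS" "\<not> bounded F" "\<not> bounded G"
  obtain x y where xy: "F = connected_component_set (- D) x" "G = connected_component_set (- D) y"
    using *(1,2) unfolding faces_def components_iff by blast
  show "F = G" unfolding xy
    by (rule cobounded_unique_unbounded_component) (use D_bounded *(3,4) xy in auto)
qed

end

context ptri begin

lemma beta:
  assumes "E u w" "E w v" "u \<noteq> v"
  shows "arc (\<gamma> u w +++ \<gamma> w v) \<and> pathstart (\<gamma> u w +++ \<gamma> w v) = pos u \<and>
         pathfinish (\<gamma> u w +++ \<gamma> w v) = pos v \<and> path_image (\<gamma> u w +++ \<gamma> w v) = A u w \<union> A w v"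
proof -
  have ne: "{u,w} \<noteq> {w,v}" using assms(3) by (auto simp: doubleton_eq_iff)
  have "A u w \<inter> A w v \<subseteq> {pos w}" using cross[OF assms(1,2) ne] assms(3) by auto
  then have "arc (\<gamma> u w +++ \<gamma> w v)"
    using assms by (intro arc_join) (auto simp: arcE startE finishE)
  then show ?thesis using assms by (simp add: path_image_join startE finishE)
qed

lemma three_bdd:
  assumes F: "F1 \<in> FS" "F2 \<in> FS" "F3 \<in> FS" and d: "F3 \<noteq> F1" "F3 \<noteq> F2"
    and b: "bounded F1" "bounded F2" and uv: "u \<noteq> v" "E u v"
    and w: "w1 \<noteq> w2" "w1 \<noteq> u" "w1 \<noteq> v" "w2 \<noteq> u" "w2 \<noteq> v"
    and E1: "E u w1" "E w1 v" and E2: "E u w2" "E w2 v"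
    and f1: "frontier F1 = A u v \<union> A u w1 \<union> A w1 v"
    and f2: "frontier F2 = A u v \<union> A u w2 \<union> A w2 v"
    and f3: "A u v \<subseteq> frontier F3"
  shows False
proof -
  have in1: "F1 = inside (frontier F1)" using face_side[OF F(1)] face_jordan[OF F(1)] b(1) by metis
  have in2: "F2 = inside (frontier F2)" using face_side[OF F(2)] face_jordan[OF F(2)] b(2) by metis
  define b1 where "b1 = \<gamma> u w1 +++ \<gamma> w1 v"
  define b2 where "b2 = \<gamma> u w2 +++ \<gamma> w2 v"
  note B1 = beta[OF E1 uv(1), folded b1_def] and B2 = beta[OF E2 uv(1), folded b2_def]
  have sp: "simple_path b1" "simple_path b2" "simple_path (\<gamma> u v)"
    using B1 B2 arcE[OF uv(2)] arc_imp_simple_path by auto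
  have pu: "pos u \<noteq> pos v" using inj_pos uv(1) by (meson injD)
  have Es: "E w1 u" "E v w1" "E w2 u" "E v w2" "E v u" using E1 E2 uv symE by auto
  have pm: "pos u \<in> A u w1" "pos u \<in> A u w2" "pos v \<in> A w1 v" "pos v \<in> A w2 v" "pos u \<in> A u v" "pos v \<in> A u v"
    using posA E1 E2 uv by auto
  have x1: "A u w1 \<inter> A u w2 \<subseteq> {pos u}" using cross[OF E1(1) E2(1)] w by (auto simp: doubleton_eq_iff)
  have x2: "A u w1 \<inter> A w2 v \<subseteq> {}" using cross[OF E1(1) E2(2)] w uv by (auto simp: doubleton_eq_iff)
  have x3: "A w1 v \<inter> A u w2 \<subseteq> {}" using cross[OF E1(2) E2(1)] w uv by (auto simp: doubleton_eq_iff)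
  have x4: "A w1 v \<inter> A w2 v \<subseteq> {pos v}" using cross[OF E1(2) E2(2)] w by (auto simp: doubleton_eq_iff)
  have y1: "A u v \<inter> A u w1 \<subseteq> {pos u}" using cross[OF uv(2) E1(1)] w by (auto simp: doubleton_eq_iff)
  have y2: "A u v \<inter> A w1 v \<subseteq> {pos v}" using cross[OF uv(2) E1(2)] w by (auto simp: doubleton_eq_iff)
  have y3: "A u v \<inter> A u w2 \<subseteq> {pos u}" using cross[OF uv(2) E2(1)] w by (auto simp: doubleton_eq_iff)
  have y4: "A u v \<inter> A w2 v \<subseteq> {pos v}" using cross[OF uv(2) E2(2)] w by (auto simp: doubleton_eq_iff)
  have i12: "path_image b1 \<inter> path_image b2 = {pos u, pos v}"
    using B1 B2 x1 x2 x3 x4 pm by blast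
  have i13: "path_image b1 \<inter> path_image (\<gamma> u v) = {pos u, pos v}"
    using B1 y1 y2 pm by blast
  have i23: "path_image b2 \<inter> path_image (\<gamma> u v) = {pos u, pos v}"
    using B2 y3 y4 pm by blast
  have fr1: "frontier F1 = path_image b1 \<union> A u v" using f1 B1 by auto
  have fr2: "frontier F2 = path_image b2 \<union> A u v" using f2 B2 by auto
  have bD: "path_image b1 \<subseteq> D" "path_image b2 \<subseteq> D" "A u v \<subseteq> D"
    using B1 B2 A_D E1 E2 uv by auto
  have h1: "path_image b1 \<inter> inside (path_image b2 \<union> path_image (\<gamma> u v)) = {}"
    using fr2 in2 face_D[OF F(2)] bD by auto
  have h2: "path_image b2 \<inter> inside (path_image b1 \<union> path_image (\<gamma> u v)) = {}"
    using fr1 in1 face_D[OF F(1)] bD by auto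
  have ne: "path_image (\<gamma> u v) \<inter> inside (path_image b1 \<union> path_image b2) \<noteq> {}"
    by (rule theta_middle[OF sp B1[THEN conjunct2, THEN conjunct1] B1[THEN conjunct2, THEN conjunct2, THEN conjunct1]
          B2[THEN conjunct2, THEN conjunct1] B2[THEN conjunct2, THEN conjunct2, THEN conjunct1]
          startE[OF uv(2)] finishE[OF uv(2)] pu i12 i13 i23 h1 h2])
  obtain
    "inside (path_image b1 \<union> path_image (\<gamma> u v)) \<union> inside (path_image b2 \<union> path_image (\<gamma> u v)) \<union>
      (path_image (\<gamma> u v) - {pos u, pos v}) = inside (path_image b1 \<union> path_image b2)"
    by (rule split_inside_simple_closed_curve[OF sp(1) B1[THEN conjunct2, THEN conjunct1] B1[THEN conjunct2, THEN conjunct2, THEN conjunct1]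
          sp(2) B2[THEN conjunct2, THEN conjunct1] B2[THEN conjunct2, THEN conjunct2, THEN conjunct1]
          sp(3) startE[OF uv(2)] finishE[OF uv(2)] pu i12 i13 i23 ne])
  then have dec: "F1 \<union> F2 \<union> (A u v - {pos u, pos v}) = inside (path_image b1 \<union> path_image b2)"
    using in1 in2 fr1 fr2 by simp
  define p where "p = \<gamma> u v (1/2)"
  have p: "p \<in> A u v" "p \<notin> range pos" using mid[OF uv(2)] p_def by auto
  have pin: "p \<in> inside (path_image b1 \<union> path_image b2)" using dec p by blast
  have op: "open (inside (path_image b1 \<union> path_image b2))"
    by (rule open_inside) (use sp in \<open>auto intro!: closed_Un compact_imp_closed compact_path_image simple_path_imp_path\<close>)
  have "p \<in> closure F3" using f3 p frontier_def by (metis Diff_iff subsetD)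
  then have "inside (path_image b1 \<union> path_image b2) \<inter> F3 \<noteq> {}"
    using open_Int_closure_eq_empty[OF op, of F3] pin by blast
  then have "F3 \<inter> F1 \<noteq> {} \<or> F3 \<inter> F2 \<noteq> {}"
    using dec face_D[OF F(3)] bD by blast
  then show False using face_eq F d by blast
qed

lemma le2_aux:
  assumes uv: "E u v" and F: "F1 \<in> FS" "F2 \<in> FS" "F3 \<in> FS" and d: "F1 \<noteq> F2" "F1 \<noteq> F3" "F2 \<noteq> F3"
    and t: "\<forall>F\<in>{F1,F2,F3}. u \<in> tri F \<and> v \<in> tri F"
  shows False
proof -
  have uv1: "u \<noteq> v" using uv irrE by auto
  obtain w1 where w1: "w1 \<noteq> u" "w1 \<noteq> v" "E u w1" "E w1 v" "frontier F1 = A u v \<union> A u w1 \<union> A w1 v"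
    using apex[OF F(1) _ _ uv1] t by blast
  obtain w2 where w2: "w2 \<noteq> u" "w2 \<noteq> v" "E u w2" "E w2 v" "frontier F2 = A u v \<union> A u w2 \<union> A w2 v"
    using apex[OF F(2) _ _ uv1] t by blast
  obtain w3 where w3: "w3 \<noteq> u" "w3 \<noteq> v" "E u w3" "E w3 v" "frontier F3 = A u v \<union> A u w3 \<union> A w3 v"
    using apex[OF F(3) _ _ uv1] t by blast
  have a12: "w1 \<noteq> w2" using same_apex_False[OF F(1,2,3)] d w1(5) w2(5) by metis
  have a13: "w1 \<noteq> w3" using same_apex_False[OF F(1,3,2)] d w1(5) w3(5) by metis
  have a23: "w2 \<noteq> w3" using same_apex_False[OF F(2,3,1)] d w2(5) w3(5) by metis
  consider "bounded F1" "bounded F2" | "bounded F1" "bounded F3" | "bounded F2" "bounded F3"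
    using unbounded_unique F d by metis
  then show False
  proof cases
    case 1 show ?thesis
      by (rule three_bdd[OF F(1,2,3) _ _ 1 uv1 uv a12 w1(1,2) w2(1,2) w1(3,4) w2(3,4) w1(5) w2(5)])
         (use d w3(5) in auto)
  next
    case 2 show ?thesis
      by (rule three_bdd[OF F(1,3,2) _ _ 2 uv1 uv a13 w1(1,2) w3(1,2) w1(3,4) w3(3,4) w1(5) w3(5)])
         (use d w2(5) in auto)
  next
    case 3 show ?thesis
      by (rule three_bdd[OF F(2,3,1) _ _ 3 uv1 uv a23 w2(1,2) w3(1,2) w2(3,4) w3(3,4) w2(5) w3(5)])
         (use d w1(5) in auto)
  qed
qed

lemma card2: "E u v \<Longrightarrow> card {F\<in>FS. u \<in> tri F \<and> v \<in> tri F} = 2"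
proof -
  assume uv: "E u v"
  let ?S = "{F\<in>FS. u \<in> tri F \<and> v \<in> tri F}"
  have fin: "finite ?S" using finite_FS by simp
  obtain F G where FG: "F \<in> ?S" "G \<in> ?S" "F \<noteq> G" using ge2[OF uv] by auto
  have "?S = {F, G}"
  proof (rule ccontr)
    assume "?S \<noteq> {F,G}"
    then obtain H where "H \<in> ?S" "H \<noteq> F" "H \<noteq> G" using FG by blast
    then show False using le2_aux[OF uv, of F G H] FG by auto
  qed
  then show ?thesis using FG(3) by simp
qed

lemma tri_card: "F \<in> FS \<Longrightarrow> card (tri F) = 3"
proof -
  assume F: "F \<in> FS"
  obtain a b c where abc: "E a b" "E b c" "E c a" "frontier F = A a b \<union> A b c \<union> A c a"
    using face_tri[OF F] by blast
  show ?thesis using tri_eq[OF abc] distinct3[OF abc(1-3)] by (auto simp: card_insert_if)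
qed

end

lemma sum_if_UNIV: "(\<Sum>a\<in>(UNIV::'a::finite set). if a \<in> S then f a else 0) = sum f S"
proof -
  have "sum f S = sum f (UNIV \<inter> S)" by simp
  also have "\<dots> = (\<Sum>a\<in>UNIV. if a \<in> S then f a else 0)" by (rule sum.inter_restrict) simp
  finally show ?thesis by simp
qed

lemma sum_if_const: "finite A \<Longrightarrow> (\<Sum>x\<in>A. if P x then c else 0) = of_nat (card {x\<in>A. P x}) * (c::'b::semiring_1)"
proof -
  assume A: "finite A"
  have "(\<Sum>x\<in>A. if P x then c else 0) = (\<Sum>x\<in>{x\<in>A. P x}. c)"
    by (rule sum.inter_filter[symmetric]) (fact A)
  then show ?thesis by simp
qed

locale fstruct =
  fixes E :: "'n::finite \<Rightarrow> 'n \<Rightarrow> bool" and Fs :: "'c set" and T :: "'c \<Rightarrow> 'n set"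
  assumes sg: "simple_graph E" and finFs: "finite Fs"
    and c3: "\<And>F. F \<in> Fs \<Longrightarrow> card (T F) = 3"
    and adjT: "\<And>F x y. F \<in> Fs \<Longrightarrow> x \<in> T F \<Longrightarrow> y \<in> T F \<Longrightarrow> x \<noteq> y \<Longrightarrow> E x y"
    and two: "\<And>u v. E u v \<Longrightarrow> card {F\<in>Fs. u \<in> T F \<and> v \<in> T F} = 2"
begin

definition N where "N a b = card {F\<in>Fs. a \<in> T F \<and> b \<in> T F}"

lemma irr: "\<not> E a a" using sg by (simp add: simple_graph_def)
lemma symm: "E a b \<Longrightarrow> E b a" using sg by (simp add: simple_graph_def)

lemma N_off: "a \<noteq> b \<Longrightarrow> N a b = (if E a b then 2 else 0)"
proof (cases "E a b")
  case True then show ?thesis using two unfolding N_def by simp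
next
  case False
  assume ab: "a \<noteq> b"
  have e: "{F\<in>Fs. a \<in> T F \<and> b \<in> T F} = {}" using adjT ab False by blast
  show ?thesis unfolding N_def e using False by simp
qed

lemma N_sum: "real (N a b) = (\<Sum>F\<in>Fs. if a \<in> T F \<and> b \<in> T F then 1 else 0)"
  unfolding N_def using sum_if_const[OF finFs, of "\<lambda>F. a \<in> T F \<and> b \<in> T F" "1::real"] by simp

lemma N_diag: "N a a = degree E a"
proof -
  have "(\<Sum>b\<in>UNIV. if b \<noteq> a then real (N a b) else 0) = (\<Sum>b\<in>UNIV. if E a b then 2 else 0)"
    by (rule sum.cong) (auto simp: N_off irr)
  also have "\<dots> = real (card {b. E a b}) * 2"
    using sum_if_const[of UNIV "E a" "2::real"] by simp
  finally have 1: "(\<Sum>b\<in>UNIV. if b \<noteq> a then real (N a b) else 0) = 2 * real (degree E a)"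
    by (simp add: degree_def)
  have "(\<Sum>b\<in>UNIV. if b \<noteq> a then real (N a b) else 0)
      = (\<Sum>b\<in>UNIV. \<Sum>F\<in>Fs. if b \<noteq> a \<and> a \<in> T F \<and> b \<in> T F then 1 else 0)"
    by (rule sum.cong) (auto simp: N_sum)
  also have "\<dots> = (\<Sum>F\<in>Fs. \<Sum>b\<in>UNIV. if b \<noteq> a \<and> a \<in> T F \<and> b \<in> T F then 1 else 0)"
    by (rule sum.swap)
  also have "\<dots> = (\<Sum>F\<in>Fs. if a \<in> T F then 2 else 0)"
  proof (rule sum.cong)
    fix F assume F: "F \<in> Fs"
    have "(\<Sum>b\<in>UNIV. if b \<noteq> a \<and> a \<in> T F \<and> b \<in> T F then 1 else (0::real))
        = real (card {b\<in>UNIV. b \<noteq> a \<and> a \<in> T F \<and> b \<in> T F})"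
      using sum_if_const[of UNIV "\<lambda>b. b \<noteq> a \<and> a \<in> T F \<and> b \<in> T F" "1::real"] by simp
    also have "\<dots> = (if a \<in> T F then 2 else 0)"
    proof (cases "a \<in> T F")
      case True
      have "{b\<in>UNIV. b \<noteq> a \<and> a \<in> T F \<and> b \<in> T F} = T F - {a}" using True by auto
      moreover have "finite (T F)" using c3[OF F] card_ge_0_finite by fastforce
      ultimately show ?thesis using True c3[OF F] by simp
    qed simp
    finally show "(\<Sum>b\<in>UNIV. if b \<noteq> a \<and> a \<in> T F \<and> b \<in> T F then 1 else (0::real)) = (if a \<in> T F then 2 else 0)" .
  qed simp
  also have "\<dots> = 2 * real (N a a)"
    using sum_if_const[OF finFs, of "\<lambda>F. a \<in> T F" "2::real"] unfolding N_def by simp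
  finally show ?thesis using 1 by simp
qed

lemma sq_expand:
  fixes x :: "'n \<Rightarrow> real"
  shows "(\<Sum>F\<in>Fs. (\<Sum>a\<in>T F. x a)^2) = (\<Sum>a\<in>UNIV. \<Sum>b\<in>UNIV. x a * x b * real (N a b))"
proof -
  have "(\<Sum>F\<in>Fs. (\<Sum>a\<in>T F. x a)^2) = (\<Sum>F\<in>Fs. \<Sum>a\<in>UNIV. \<Sum>b\<in>UNIV. if a \<in> T F \<and> b \<in> T F then x a * x b else 0)"
  proof (rule sum.cong)
    fix F
    have "(\<Sum>a\<in>T F. x a)^2 = (\<Sum>a\<in>UNIV. if a \<in> T F then x a else 0) * (\<Sum>b\<in>UNIV. if b \<in> T F then x b else 0)"
      by (simp add: sum_if_UNIV power2_eq_square)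
    also have "\<dots> = (\<Sum>a\<in>UNIV. \<Sum>b\<in>UNIV. (if a \<in> T F then x a else 0) * (if b \<in> T F then x b else 0))"
      by (rule sum_product)
    also have "\<dots> = (\<Sum>a\<in>UNIV. \<Sum>b\<in>UNIV. if a \<in> T F \<and> b \<in> T F then x a * x b else 0)"
      by (intro sum.cong) auto
    finally show "(\<Sum>a\<in>T F. x a)^2 = \<dots>" .
  qed simp
  also have "\<dots> = (\<Sum>a\<in>UNIV. \<Sum>F\<in>Fs. \<Sum>b\<in>UNIV. if a \<in> T F \<and> b \<in> T F then x a * x b else 0)"
    by (rule sum.swap)
  also have "\<dots> = (\<Sum>a\<in>UNIV. \<Sum>b\<in>UNIV. \<Sum>F\<in>Fs. if a \<in> T F \<and> b \<in> T F then x a * x b else 0)"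
    by (intro sum.cong refl sum.swap)
  also have "\<dots> = (\<Sum>a\<in>UNIV. \<Sum>b\<in>UNIV. x a * x b * real (N a b))"
  proof (intro sum.cong refl)
    fix a b
    have "(\<Sum>F\<in>Fs. if a \<in> T F \<and> b \<in> T F then x a * x b else 0)
        = (\<Sum>F\<in>Fs. x a * x b * (if a \<in> T F \<and> b \<in> T F then 1 else 0))"
      by (intro sum.cong) auto
    also have "\<dots> = x a * x b * real (N a b)" by (simp add: N_sum sum_distrib_left)
    finally show "(\<Sum>F\<in>Fs. if a \<in> T F \<and> b \<in> T F then x a * x b else 0) = x a * x b * real (N a b)" .
  qed
  finally show ?thesis .
qed

lemma quad_bound:
  fixes x :: "'n \<Rightarrow> real" and \<Delta> :: real
  assumes deg: "\<And>a. real (degree E a) \<le> \<Delta>"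
  shows "(\<Sum>a\<in>UNIV. \<Sum>b\<in>UNIV. if E a b then x a * x b else 0) \<ge> - (\<Delta> / 2) * (\<Sum>a\<in>UNIV. (x a)^2)"
proof -
  let ?Q = "(\<Sum>a\<in>UNIV. \<Sum>b\<in>UNIV. if E a b then x a * x b else 0)"
  have row: "(\<Sum>b\<in>UNIV. x a * x b * real (N a b)) = (x a)^2 * real (degree E a) + 2 * (\<Sum>b\<in>UNIV. if E a b then x a * x b else 0)" for a
  proof -
    have "(\<Sum>b\<in>UNIV. x a * x b * real (N a b))
        = (\<Sum>b\<in>UNIV. (if b = a then (x a)^2 * real (degree E a) else 0) + 2 * (if E a b then x a * x b else 0))"
      by (intro sum.cong) (auto simp: N_off N_diag irr power2_eq_square)
    also have "\<dots> = (x a)^2 * real (degree E a) + 2 * (\<Sum>b\<in>UNIV. if E a b then x a * x b else 0)"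
      by (simp add: sum.distrib sum_distrib_left)
    finally show ?thesis .
  qed
  have "0 \<le> (\<Sum>F\<in>Fs. (\<Sum>a\<in>T F. x a)^2)" by (intro sum_nonneg) simp
  also have "\<dots> = (\<Sum>a\<in>UNIV. (x a)^2 * real (degree E a)) + 2 * ?Q"
    by (simp add: sq_expand row sum.distrib sum_distrib_left)
  finally have 1: "0 \<le> (\<Sum>a\<in>UNIV. (x a)^2 * real (degree E a)) + 2 * ?Q" .
  have "(\<Sum>a\<in>UNIV. (x a)^2 * real (degree E a)) \<le> (\<Sum>a\<in>UNIV. (x a)^2 * \<Delta>)"
    by (intro sum_mono mult_left_mono deg) simp
  also have "\<dots> = \<Delta> * (\<Sum>a\<in>UNIV. (x a)^2)" by (simp add: sum_distrib_left mult.commute)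
  finally show ?thesis using 1 by linarith
qed

lemma colour_count:
  assumes pc: "proper_colouring E 3 c" and j: "j < 3" "j \<noteq> c v"
  shows "2 * card {u. E v u \<and> c u = j} = degree E v"
proof -
  have one: "card {u\<in>T F. c u = j} = 1" if F: "F \<in> Fs" for F
  proof -
    have fin: "finite (T F)" using c3[OF F] card_ge_0_finite by fastforce
    have inj: "inj_on c (T F)"
      using adjT[OF F] pc unfolding proper_colouring_def inj_on_def by blast
    have sub: "c ` T F \<subseteq> {..<3}" using pc unfolding proper_colouring_def by auto
    have "card (c ` T F) = 3" using card_image[OF inj] c3[OF F] by simp
    then have "c ` T F = {..<3}" using sub by (intro card_subset_eq) auto
    then obtain u where u: "u \<in> T F" "c u = j" using j(1) by (metis imageE lessThan_iff)
    have "{u\<in>T F. c u = j} = {u}" using u inj unfolding inj_on_def by blast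
    then show ?thesis by simp
  qed
  have "real (2 * card {u. E v u \<and> c u = j}) = (\<Sum>u\<in>UNIV. if E v u \<and> c u = j then 2 else 0)"
    using sum_if_const[of UNIV "\<lambda>u. E v u \<and> c u = j" "2::real"] by simp
  also have "\<dots> = (\<Sum>u\<in>UNIV. if c u = j then real (N v u) else 0)"
  proof (intro sum.cong refl)
    fix u
    show "(if E v u \<and> c u = j then 2 else 0) = (if c u = j then real (N v u) else 0)"
    proof (cases "c u = j")
      case True
      then have "v \<noteq> u" using j(2) by auto
      then show ?thesis using N_off[of v u] True by auto
    qed simp
  qed
  also have "\<dots> = (\<Sum>u\<in>UNIV. \<Sum>F\<in>Fs. if c u = j \<and> v \<in> T F \<and> u \<in> T F then 1 else 0)"
    by (intro sum.cong refl) (auto simp: N_sum)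
  also have "\<dots> = (\<Sum>F\<in>Fs. \<Sum>u\<in>UNIV. if c u = j \<and> v \<in> T F \<and> u \<in> T F then 1 else 0)"
    by (rule sum.swap)
  also have "\<dots> = (\<Sum>F\<in>Fs. if v \<in> T F then 1 else 0)"
  proof (intro sum.cong refl)
    fix F assume F: "F \<in> Fs"
    have "(\<Sum>u\<in>UNIV. if c u = j \<and> v \<in> T F \<and> u \<in> T F then 1 else (0::real))
        = real (card {u\<in>UNIV. c u = j \<and> v \<in> T F \<and> u \<in> T F})"
      using sum_if_const[of UNIV "\<lambda>u. c u = j \<and> v \<in> T F \<and> u \<in> T F" "1::real"] by simp
    also have "\<dots> = (if v \<in> T F then 1 else 0)"
    proof (cases "v \<in> T F")
      case True
      have "{u\<in>UNIV. c u = j \<and> v \<in> T F \<and> u \<in> T F} = {u\<in>T F. c u = j}" using True by auto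
      then show ?thesis using True one[OF F] by simp
    qed simp
    finally show "(\<Sum>u\<in>UNIV. if c u = j \<and> v \<in> T F \<and> u \<in> T F then 1 else (0::real)) = (if v \<in> T F then 1 else 0)" .
  qed
  also have "\<dots> = real (N v v)" by (simp add: N_sum)
  finally have "real (2 * card {u. E v u \<and> c u = j}) = real (N v v)" .
  then show ?thesis using N_diag[of v] by (metis of_nat_eq_iff)
qed

end

lemma quad_zero:
  fixes a c :: real
  assumes h: "\<And>t. 0 \<le> 2 * t * a + t^2 * c" and a: "a \<ge> 0"
  shows "a = 0"
proof (rule ccontr)
  assume "a \<noteq> 0" then have ap: "a > 0" using a by simp
  define k where "k = \<bar>c\<bar> + 1"
  have k: "k > 0" unfolding k_def by simp
  define t where "t = - (a / k)"
  have tneg: "t < 0" unfolding t_def using ap k by simp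
  have at: "\<bar>t\<bar> = a / k" unfolding t_def using ap k by simp
  have ck: "\<bar>c\<bar> \<le> k" unfolding k_def by simp
  have "\<bar>t * c\<bar> = (a / k) * \<bar>c\<bar>" by (simp add: abs_mult at)
  also have "\<dots> \<le> (a / k) * k" using ck ap k by (intro mult_left_mono) auto
  also have "(a / k) * k = a" using k by simp
  finally have tc: "\<bar>t * c\<bar> \<le> a" .
  have pos: "2 * a + t * c > 0" using tc ap by linarith
  have "t * (2 * a + t * c) < 0" using tneg pos by (rule mult_neg_pos)
  moreover have "2 * t * a + t^2 * c = t * (2 * a + t * c)" by (simp add: power2_eq_square algebra_simps)
  ultimately show False using h[of t] by linarith
qed

context
  fixes E :: "'n::finite \<Rightarrow> 'n \<Rightarrow> bool"
  assumes sg: "simple_graph E"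
begin

abbreviation "M \<equiv> adj_matrix E"

lemma qf: "x \<bullet> (M *v x) = (\<Sum>a\<in>UNIV. \<Sum>b\<in>UNIV. if E a b then x$a * x$b else 0)"
  unfolding inner_vec_def matrix_vector_mult_def adj_matrix_def
  by (simp add: sum_distrib_left) (intro sum.cong refl; simp)

lemma Msym: "x \<bullet> (M *v y) = y \<bullet> (M *v x)"
proof -
  have "x \<bullet> (M *v y) = (\<Sum>a\<in>UNIV. \<Sum>b\<in>UNIV. if E a b then x$a * y$b else 0)"
    unfolding inner_vec_def matrix_vector_mult_def adj_matrix_def
    by (simp add: sum_distrib_left) (intro sum.cong refl; simp)
  also have "\<dots> = (\<Sum>b\<in>UNIV. \<Sum>a\<in>UNIV. if E a b then x$a * y$b else 0)" by (rule sum.swap)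
  also have "\<dots> = (\<Sum>b\<in>UNIV. \<Sum>a\<in>UNIV. if E b a then y$b * x$a else 0)"
    using sg unfolding simple_graph_def by (intro sum.cong refl) (auto simp: mult.commute)
  also have "\<dots> = y \<bullet> (M *v x)"
    unfolding inner_vec_def matrix_vector_mult_def adj_matrix_def
    by (simp add: sum_distrib_left) (intro sum.cong refl; simp)
  finally show ?thesis .
qed

lemma eig_finite: "finite {l. is_eigenvalue M l}"
proof -
  let ?S = "{l. is_eigenvalue M l}"
  define ev where "ev l = (SOME x. x \<noteq> 0 \<and> M *v x = l *\<^sub>R x)" for l
  have ev: "ev l \<noteq> 0 \<and> M *v ev l = l *\<^sub>R ev l" if "l \<in> ?S" for l
  proof -
    have "\<exists>x. x \<noteq> 0 \<and> M *v x = l *\<^sub>R x" using that by (simp add: is_eigenvalue_def)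
    then show ?thesis unfolding ev_def by (rule someI_ex)
  qed
  have orth: "ev l1 \<bullet> ev l2 = 0" if "l1 \<in> ?S" "l2 \<in> ?S" "l1 \<noteq> l2" for l1 l2
  proof -
    have e1: "M *v ev l1 = l1 *\<^sub>R ev l1" using ev[OF that(1)] by blast
    have e2: "M *v ev l2 = l2 *\<^sub>R ev l2" using ev[OF that(2)] by blast
    have "ev l1 \<bullet> (M *v ev l2) = l2 * (ev l1 \<bullet> ev l2)" unfolding e2 by (rule inner_scaleR_right)
    moreover have "ev l2 \<bullet> (M *v ev l1) = l1 * (ev l2 \<bullet> ev l1)" unfolding e1 by (rule inner_scaleR_right)
    moreover have "ev l1 \<bullet> (M *v ev l2) = ev l2 \<bullet> (M *v ev l1)" by (rule Msym)
    moreover have "ev l2 \<bullet> ev l1 = ev l1 \<bullet> ev l2" by (rule inner_commute)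
    ultimately have "l2 * (ev l1 \<bullet> ev l2) = l1 * (ev l1 \<bullet> ev l2)" by metis
    then have "(l2 - l1) * (ev l1 \<bullet> ev l2) = 0" by (simp add: left_diff_distrib)
    then show ?thesis using that(3) by simp
  qed
  have inj: "inj_on ev ?S"
  proof (rule inj_onI)
    fix l1 l2 assume *: "l1 \<in> ?S" "l2 \<in> ?S" "ev l1 = ev l2"
    have "l1 *\<^sub>R ev l1 = M *v ev l1" using ev[OF *(1)] by simp
    also have "\<dots> = M *v ev l2" using *(3) by simp
    also have "\<dots> = l2 *\<^sub>R ev l2" using ev[OF *(2)] by simp
    finally have "l1 *\<^sub>R ev l1 = l2 *\<^sub>R ev l1" using *(3) by simp
    then have "(l1 - l2) *\<^sub>R ev l1 = 0" by (simp add: scaleR_diff_left)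
    then show "l1 = l2" using ev[OF *(1)] by simp
  qed
  have "pairwise orthogonal (ev ` ?S)"
    unfolding pairwise_def orthogonal_def
  proof (intro ballI impI)
    fix x y assume xy: "x \<in> ev ` ?S" "y \<in> ev ` ?S" "x \<noteq> y"
    then obtain l1 l2 where l: "l1 \<in> ?S" "l2 \<in> ?S" "x = ev l1" "y = ev l2" by blast
    then have "l1 \<noteq> l2" using xy(3) by blast
    then show "x \<bullet> y = 0" using orth[OF l(1,2)] l(3,4) by simp
  qed
  moreover have "0 \<notin> ev ` ?S"
  proof
    assume "0 \<in> ev ` ?S"
    then obtain l where l: "l \<in> ?S" "0 = ev l" by blast
    then show False using ev[OF l(1)] by simp
  qed
  ultimately have "independent (ev ` ?S)" by (rule pairwise_orthogonal_independent)
  then have "finite (ev ` ?S)" using independent_bound by blast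
  then show ?thesis using inj finite_imageD by blast
qed

lemma aux_scale:
  fixes s m F :: real
  assumes "s > 0" "m \<le> (1/s)^2 * F" shows "s^2 * m \<le> F"
proof -
  have "s^2 * m \<le> s^2 * ((1/s)^2 * F)" using assms by (intro mult_left_mono) auto
  also have "s^2 * ((1/s)^2 * F) = F" using assms(1) by (simp add: power_divide)
  finally show ?thesis .
qed

lemma eig_exists: "\<exists>l. is_eigenvalue M l"
proof -
  define b where "b x y = x \<bullet> (M *v y)" for x y :: "real^'n"
  have badd1: "b (x + y) w = b x w + b y w" for x y w unfolding b_def by (simp add: inner_add_left)
  have badd2: "b x (y + w) = b x y + b x w" for x y w unfolding b_def by (simp add: matrix_vector_right_distrib inner_add_right)
  have bsc1: "b (c *\<^sub>R x) y = c * b x y" for c x y unfolding b_def by simp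
  have bsc2: "b x (c *\<^sub>R y) = c * b x y" for c x y unfolding b_def by (simp add: matrix_vector_mult_scaleR)
  have bsym: "b x y = b y x" for x y unfolding b_def by (rule Msym)
  have "axis undefined 1 \<in> sphere (0::real^'n) 1" by (simp add: norm_axis_1)
  then have ne: "sphere (0::real^'n) 1 \<noteq> {}" by blast
  have cont: "continuous_on (sphere 0 1) (\<lambda>x. b x x)"
    unfolding b_def by (rule continuous_on_inner[OF continuous_on_id matrix_vector_mult_linear_continuous_on])
  obtain x0 where x0: "x0 \<in> sphere 0 1" "\<And>y. y \<in> sphere 0 1 \<Longrightarrow> b x0 x0 \<le> b y y"
    using continuous_attains_inf[OF compact_sphere ne cont] by blast
  define m where "m = b x0 x0"
  have x0n: "x0 \<bullet> x0 = 1" using x0(1) by (simp add: dot_square_norm)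
  have lb: "m * (y \<bullet> y) \<le> b y y" for y
  proof (cases "y = 0")
    case True then show ?thesis by (simp add: b_def)
  next
    case False
    define s where "s = norm y"
    have s: "s > 0" using False s_def by simp
    have "(1/s) *\<^sub>R y \<in> sphere 0 1" using s by (simp add: s_def)
    then have "m \<le> b ((1/s) *\<^sub>R y) ((1/s) *\<^sub>R y)" using x0(2) m_def by blast
    also have "b ((1/s) *\<^sub>R y) ((1/s) *\<^sub>R y) = (1/s)^2 * b y y"
      by (simp only: bsc1 bsc2 power2_eq_square mult.assoc)
    finally have "s^2 * m \<le> b y y" by (rule aux_scale[OF s])
    moreover have "y \<bullet> y = s^2" by (simp add: s_def dot_square_norm)
    ultimately show ?thesis by (simp add: mult.commute)
  qed
  define z where "z = M *v x0 - m *\<^sub>R x0"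
  have zx: "z \<bullet> x0 = 0"
  proof -
    have "z \<bullet> x0 = (M *v x0) \<bullet> x0 - m * (x0 \<bullet> x0)" unfolding z_def by (simp add: inner_diff_left)
    also have "(M *v x0) \<bullet> x0 = m" unfolding m_def b_def by (rule inner_commute)
    finally show ?thesis using x0n by simp
  qed
  have bzx: "b z x0 = z \<bullet> z + m * (z \<bullet> x0)"
  proof -
    have "z \<bullet> z = z \<bullet> (M *v x0 - m *\<^sub>R x0)" by (simp only: z_def[symmetric])
    also have "\<dots> = z \<bullet> (M *v x0) - m * (z \<bullet> x0)" by (simp add: inner_diff_right)
    finally have "z \<bullet> z = z \<bullet> (M *v x0) - m * (z \<bullet> x0)" .
    then show ?thesis unfolding b_def by linarith
  qed
  have expand: "b (x0 + t *\<^sub>R z) (x0 + t *\<^sub>R z) - m * ((x0 + t *\<^sub>R z) \<bullet> (x0 + t *\<^sub>R z))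
      = 2 * t * (z \<bullet> z) + t^2 * (b z z - m * (z \<bullet> z))" for t
  proof -
    have 1: "b (x0 + t *\<^sub>R z) (x0 + t *\<^sub>R z) = b x0 x0 + t * b x0 z + t * b z x0 + t * (t * b z z)"
      by (simp only: badd1 badd2 bsc1 bsc2) (simp add: algebra_simps)
    have 2: "(x0 + t *\<^sub>R z) \<bullet> (x0 + t *\<^sub>R z) = x0 \<bullet> x0 + t * (x0 \<bullet> z) + t * (z \<bullet> x0) + t * (t * (z \<bullet> z))"
      by (simp only: inner_add_left inner_add_right inner_scaleR_left inner_scaleR_right) (simp add: algebra_simps)
    have 3: "x0 \<bullet> z = z \<bullet> x0" by (rule inner_commute)
    have 4: "b x0 z = b z x0" by (rule bsym)
    show ?thesis unfolding 1 2 3 4 bzx zx x0n m_def[symmetric]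
      by (simp add: power2_eq_square algebra_simps)
  qed
  have "0 \<le> 2 * t * (z \<bullet> z) + t^2 * (b z z - m * (z \<bullet> z))" for t
  proof -
    have "0 \<le> b (x0 + t *\<^sub>R z) (x0 + t *\<^sub>R z) - m * ((x0 + t *\<^sub>R z) \<bullet> (x0 + t *\<^sub>R z))"
      using lb[of "x0 + t *\<^sub>R z"] by linarith
    then show ?thesis unfolding expand .
  qed
  then have "z \<bullet> z = 0" by (rule quad_zero) simp
  then have "z = 0" by simp
  then have "M *v x0 = m *\<^sub>R x0" unfolding z_def by simp
  moreover have "x0 \<noteq> 0" using x0(1) by auto
  ultimately show ?thesis unfolding is_eigenvalue_def by blast
qed

end

lemma degree_le_max: "degree E a \<le> max_degree E"
  unfolding max_degree_def by (rule Max_ge) auto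

theorem mainTheorem16:
  fixes E :: "'n::finite \<Rightarrow> 'n \<Rightarrow> bool" and k :: nat
  assumes "plane_triangulation E"
  shows "smallest_eigenvalue E \<ge> - real (max_degree E) / 2 \<and>
         (regular E k \<and> chromatic_number E = 3 \<longrightarrow> smallest_eigenvalue E = - real k / 2)"
proof -
  obtain pos \<gamma> where sg: "simple_graph E" and emb: "plane_embedding E pos \<gamma>"
    and tf: "\<forall>F\<in>faces E pos \<gamma>. triangular_face E pos \<gamma> F"
    using assms unfolding plane_triangulation_def by blast
  interpret P: ptri E pos \<gamma> using sg emb tf by unfold_locales
  interpret Fs: fstruct E "faces E pos \<gamma>" P.tri
  proof unfold_locales
    show "simple_graph E" by (fact sg)
    show "finite (faces E pos \<gamma>)" by (fact P.finite_FS)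
    show "\<And>F. F \<in> faces E pos \<gamma> \<Longrightarrow> card (P.tri F) = 3" by (rule P.tri_card)
    show "\<And>F x y. F \<in> faces E pos \<gamma> \<Longrightarrow> x \<in> P.tri F \<Longrightarrow> y \<in> P.tri F \<Longrightarrow> x \<noteq> y \<Longrightarrow> E x y"
      by (rule P.tri_adj)
    show "\<And>u v. E u v \<Longrightarrow> card {F \<in> faces E pos \<gamma>. u \<in> P.tri F \<and> v \<in> P.tri F} = 2"
      by (rule P.card2)
  qed
  let ?M = "adj_matrix E"
  let ?S = "{l. is_eigenvalue ?M l}"
  have finS: "finite ?S" by (rule eig_finite[OF sg])
  have neS: "?S \<noteq> {}" using eig_exists[OF sg] by blast
  have lower: "l \<ge> - (\<Delta> / 2)" if l: "l \<in> ?S" and deg: "\<And>a. real (degree E a) \<le> \<Delta>" for l \<Delta>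
  proof -
    obtain x where x: "x \<noteq> 0" "?M *v x = l *\<^sub>R x" using l unfolding is_eigenvalue_def by blast
    have xx: "x \<bullet> x = (\<Sum>a\<in>UNIV. (x$a)^2)" unfolding inner_vec_def by (simp add: power2_eq_square)
    have xpos: "x \<bullet> x > 0" using x(1) by simp
    have "l * (x \<bullet> x) = x \<bullet> (?M *v x)" using x(2) by simp
    also have "\<dots> = (\<Sum>a\<in>UNIV. \<Sum>b\<in>UNIV. if E a b then x$a * x$b else 0)" by (rule qf[OF sg])
    finally have e: "l * (x \<bullet> x) = (\<Sum>a\<in>UNIV. \<Sum>b\<in>UNIV. if E a b then x$a * x$b else 0)" .
    have q: "(\<Sum>a\<in>UNIV. \<Sum>b\<in>UNIV. if E a b then x$a * x$b else 0) \<ge> - (\<Delta> / 2) * (\<Sum>a\<in>UNIV. (x$a)^2)"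
      by (rule Fs.quad_bound[of \<Delta> "\<lambda>a. x$a", OF deg])
    have "- (\<Delta> / 2) * (x \<bullet> x) \<le> l * (x \<bullet> x)"
      using q by (simp only: e[symmetric] xx[symmetric])
    then show ?thesis by (rule mult_right_le_imp_le[OF _ xpos])
  qed
  have part1: "smallest_eigenvalue E \<ge> - real (max_degree E) / 2"
  proof -
    have dm: "\<And>a. real (degree E a) \<le> real (max_degree E)" using degree_le_max by simp
    have "\<forall>l\<in>?S. - real (max_degree E) / 2 \<le> l" using lower[OF _ dm] by simp
    then show ?thesis unfolding smallest_eigenvalue_def using finS neS by (simp add: Min_ge_iff)
  qed
  have part2: "smallest_eigenvalue E = - real k / 2" if reg: "regular E k" and chi: "chromatic_number E = 3"
  proof -
    have degk: "degree E a = k" for a using reg unfolding regular_def by blast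
    have ex: "\<exists>n c. proper_colouring E n c"
    proof -
      obtain h where h: "bij_betw h (UNIV::'n set) {0..<card (UNIV::'n set)}"
        using ex_bij_betw_finite_nat[of "UNIV::'n set"] by auto
      have "proper_colouring E (card (UNIV::'n set)) h"
        unfolding proper_colouring_def
      proof (intro conjI allI impI)
        fix v show "h v < card (UNIV::'n set)" using h bij_betwE by fastforce
      next
        fix u v assume "E u v"
        then have "u \<noteq> v" using sg unfolding simple_graph_def by blast
        then show "h u \<noteq> h v" using h unfolding bij_betw_def inj_on_def by blast
      qed
      then show ?thesis by blast
    qed
    have "\<exists>c. proper_colouring E 3 c"
      using LeastI_ex[of "\<lambda>n. \<exists>c. proper_colouring E n c"] ex chi unfolding chromatic_number_def by simp
    then obtain c where pc: "proper_colouring E 3 c" by blast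
    have c3: "c v < 3" for v using pc unfolding proper_colouring_def by blast
    have cne: "c u \<noteq> c v" if "E u v" for u v using pc that unfolding proper_colouring_def by blast
    have some01: "\<exists>v. c v = 0 \<or> c v = 1"
    proof (rule ccontr)
      assume na: "\<not> ?thesis"
      have all2: "c v = 2" for v
      proof -
        have "\<not> (c v = 0 \<or> c v = 1)" using na by blast
        then show ?thesis using c3[of v] by arith
      qed
      have "proper_colouring E 1 (\<lambda>_. 0)"
        unfolding proper_colouring_def using cne all2 by auto
      then have "chromatic_number E \<le> 1"
        unfolding chromatic_number_def by (intro Least_le exI)
      then show False using chi by simp
    qed
    define x :: "real^'n" where "x = (\<chi> v. if c v = 0 then 1 else if c v = 1 then -1 else 0)"
    define n where "n v j = card {u. E v u \<and> c u = j}" for v j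
    have nj: "2 * n v j = k" if "j < 3" "j \<noteq> c v" for v j
      using Fs.colour_count[OF pc that] degk unfolding n_def by simp
    have nself: "n v (c v) = 0" for v
    proof -
      have "{u. E v u \<and> c u = c v} = {}" using cne by fastforce
      then show ?thesis unfolding n_def by simp
    qed
    have row: "(?M *v x)$v = real (n v 0) - real (n v 1)" for v
    proof -
      have "(?M *v x)$v = (\<Sum>u\<in>UNIV. (if E v u then 1 else 0) * x$u)"
        unfolding matrix_vector_mult_def adj_matrix_def by simp
      also have "\<dots> = (\<Sum>u\<in>UNIV. (if E v u \<and> c u = 0 then 1 else 0) - (if E v u \<and> c u = 1 then 1 else 0))"
        unfolding x_def by (intro sum.cong refl) auto
      also have "\<dots> = real (n v 0) - real (n v 1)"
        unfolding sum_subtractf n_def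
        using sum_if_const[of UNIV "\<lambda>u. E v u \<and> c u = 0" "1::real"]
              sum_if_const[of UNIV "\<lambda>u. E v u \<and> c u = 1" "1::real"] by simp
      finally show ?thesis .
    qed
    have eig: "?M *v x = (- real k / 2) *\<^sub>R x"
    proof (subst vec_eq_iff, intro allI)
      fix v
      have "c v = 0 \<or> c v = 1 \<or> c v = 2" using c3[of v] by auto
      then show "(?M *v x)$v = ((- real k / 2) *\<^sub>R x)$v"
      proof (elim disjE)
        assume cv: "c v = 0"
        have "2 * n v 1 = k" using nj[of 1 v] cv by simp
        then show ?thesis using row[of v] nself[of v] cv unfolding x_def by simp
      next
        assume cv: "c v = 1"
        have "2 * n v 0 = k" using nj[of 0 v] cv by simp
        then show ?thesis using row[of v] nself[of v] cv unfolding x_def by simp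
      next
        assume cv: "c v = 2"
        have "2 * n v 0 = k" "2 * n v 1 = k" using nj[of 0 v] nj[of 1 v] cv by simp_all
        then show ?thesis using row[of v] cv unfolding x_def by simp
      qed
    qed
    have "x \<noteq> 0"
    proof -
      obtain v where "c v = 0 \<or> c v = 1" using some01 by blast
      then have "x$v \<noteq> 0" unfolding x_def by auto
      then show ?thesis by auto
    qed
    then have inS: "- real k / 2 \<in> ?S" using eig unfolding is_eigenvalue_def by blast
    have lowk: "l \<ge> - real k / 2" if "l \<in> ?S" for l
      using lower[OF that, of "real k"] degk by simp
    show ?thesis unfolding smallest_eigenvalue_def
      by (rule Min_eqI[OF finS]) (use lowk inS in auto)
  qed
  show ?thesis using part1 part2 by blast
qed


end
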